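(* Let $P<P'$ be priority forests in $\Pi(n)$. Then the Möbius function satisfies $$\mu(P,P')=\begin{cases}(-1)^{\rho(P')-\rho(P)}&\text{if }P'\text{ is a }P\text{-Boolean forest},\\ 0&\text{otherwise.}\end{cases}$$
   Context: $[n]_0=\{0,\dots,n\}$. A priority forest on $[n]_0$ is a rooted forest with vertex set $[n]_0$ whose component trees $T_0,T_1,\dots$ are increasing (each non-root vertex has a larger label than its parent) and satisfy: for $j<k$ every label of $T_j$ is smaller than every label of $T_k$. The priority lattice $\Pi(n)$ is the set of priority forests on $[n]_0$ ordered by inclusion of edge sets, together with an extra top element $\hat1$. The rank of a priority forest is $\rho(P)=|E(P)|$. For priority forests $P<P'$, an edge $e\in E(P')\setminus E(P)$ is $P$-removable if deleting $e$ from $P'$ yields a priority forest (the forest's components are re-indexed by their root labels). $P'$ is a $P$-Boolean forest if every edge of $E(P')\setminus E(P)$ is $P$-removable. *)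

theory Defs
  imports Main
begin

text \<open>Vertex set [n]_0 = {0..n}. A forest on [n]_0 is given by its set of directed
  edges (parent, child).\<close>

definition vset :: "nat \<Rightarrow> nat set" where
  "vset n = {0..n}"

definition conn :: "(nat \<times> nat) set \<Rightarrow> (nat \<times> nat) set" where
  "conn E = (E \<union> E\<inverse>)\<^sup>*"

text \<open>Priority forest: a rooted forest on [n]_0 (every vertex has at most one parent;
  vertices without a parent are roots), all trees increasing (child label > parent label),
  and for any two distinct components, all labels of one are smaller than all labels
  of the other (so components can be listed T_0, T_1, ... with label sets ordered).\<close>
definition priority_forest :: "nat \<Rightarrow> (nat \<times> nat) set \<Rightarrow> bool" where
  "priority_forest n E \<longleftrightarrow>
     E \<subseteq> vset n \<times> vset n \<and>
     (\<forall>(p, c) \<in> E. p < c) \<and>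
     (\<forall>p q c. (p, c) \<in> E \<and> (q, c) \<in> E \<longrightarrow> p = q) \<and>
     (\<forall>u \<in> vset n. \<forall>v \<in> vset n. (u, v) \<notin> conn E \<longrightarrow>
        (\<forall>x \<in> vset n. \<forall>y \<in> vset n. (u, x) \<in> conn E \<and> (v, y) \<in> conn E \<longrightarrow> x < y) \<or>
        (\<forall>x \<in> vset n. \<forall>y \<in> vset n. (u, x) \<in> conn E \<and> (v, y) \<in> conn E \<longrightarrow> y < x))"

text \<open>Elements of the priority lattice: Some E for a priority forest E, None for the
  adjoined top element.\<close>
definition pi_carrier :: "nat \<Rightarrow> (nat \<times> nat) set option set" where
  "pi_carrier n = Some ` {E. priority_forest n E} \<union> {None}"

definition pi_le :: "(nat \<times> nat) set option \<Rightarrow> (nat \<times> nat) set option \<Rightarrow> bool" where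
  "pi_le x y = (case y of None \<Rightarrow> True
                 | Some F \<Rightarrow> (case x of None \<Rightarrow> False | Some E \<Rightarrow> E \<subseteq> F))"

definition is_moebius :: "'a set \<Rightarrow> ('a \<Rightarrow> 'a \<Rightarrow> bool) \<Rightarrow> ('a \<Rightarrow> 'a \<Rightarrow> int) \<Rightarrow> bool" where
  "is_moebius A le f \<longleftrightarrow>
     (\<forall>x y. (x \<notin> A \<or> y \<notin> A) \<longrightarrow> f x y = 0) \<and>
     (\<forall>x \<in> A. \<forall>y \<in> A. f x y =
        (if x = y then 1
         else if le x y then - (\<Sum>z \<in> {z \<in> A. le x z \<and> le z y \<and> z \<noteq> y}. f x z)
         else 0))"

definition moebius :: "'a set \<Rightarrow> ('a \<Rightarrow> 'a \<Rightarrow> bool) \<Rightarrow> 'a \<Rightarrow> 'a \<Rightarrow> int" where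
  "moebius A le = (THE f. is_moebius A le f)"

definition rank :: "(nat \<times> nat) set \<Rightarrow> nat" where
  "rank E = card E"

definition removable :: "nat \<Rightarrow> (nat \<times> nat) set \<Rightarrow> (nat \<times> nat) set \<Rightarrow> nat \<times> nat \<Rightarrow> bool" where
  "removable n P P' e \<longleftrightarrow> e \<in> P' - P \<and> priority_forest n (P' - {e})"

definition boolean_forest :: "nat \<Rightarrow> (nat \<times> nat) set \<Rightarrow> (nat \<times> nat) set \<Rightarrow> bool" where
  "boolean_forest n P P' \<longleftrightarrow> (\<forall>e \<in> P' - P. removable n P P' e)"

end

theory Submission
  imports Defs
begin


fun mfuel :: "'a set \<Rightarrow> ('a \<Rightarrow> 'a \<Rightarrow> bool) \<Rightarrow> nat \<Rightarrow> 'a \<Rightarrow> 'a \<Rightarrow> int" where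
  "mfuel A le 0 x y = 0"
| "mfuel A le (Suc k) x y = (if x \<notin> A \<or> y \<notin> A then 0 else if x = y then 1
     else if le x y then - (\<Sum>z \<in> {z \<in> A. le x z \<and> le z y \<and> z \<noteq> y}. mfuel A le k x z) else 0)"

definition dn :: "'a set \<Rightarrow> ('a \<Rightarrow> 'a \<Rightarrow> bool) \<Rightarrow> 'a \<Rightarrow> 'a set" where
  "dn A le y = {z \<in> A. le z y \<and> z \<noteq> y}"

locale fpo =
  fixes A :: "'a set" and le :: "'a \<Rightarrow> 'a \<Rightarrow> bool"
  assumes fin: "finite A"
    and tr: "\<And>x y z. x \<in> A \<Longrightarrow> y \<in> A \<Longrightarrow> z \<in> A \<Longrightarrow> le x y \<Longrightarrow> le y z \<Longrightarrow> le x z"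
    and asym: "\<And>x y. x \<in> A \<Longrightarrow> y \<in> A \<Longrightarrow> le x y \<Longrightarrow> le y x \<Longrightarrow> x = y"
begin

lemma dn_less: assumes "z \<in> dn A le y" "y \<in> A" shows "card (dn A le z) < card (dn A le y)"
proof (rule psubset_card_mono)
  show "finite (dn A le y)" using fin by (simp add: dn_def)
  have zA: "z \<in> A" "le z y" "z \<noteq> y" using assms by (auto simp: dn_def)
  have "dn A le z \<subseteq> dn A le y"
  proof
    fix w assume w: "w \<in> dn A le z"
    hence "w \<in> A" "le w z" "w \<noteq> z" by (auto simp: dn_def)
    moreover have "le w y" using tr[OF \<open>w \<in> A\<close> zA(1) assms(2)] \<open>le w z\<close> zA(2) by blast
    moreover have "w \<noteq> y" using asym[OF zA(1) assms(2)] zA \<open>le w z\<close> by blast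
    ultimately show "w \<in> dn A le y" by (simp add: dn_def)
  qed
  moreover have "z \<notin> dn A le z" by (simp add: dn_def)
  moreover have "z \<in> dn A le y" by fact
  ultimately show "dn A le z \<subset> dn A le y" by blast
qed

lemma dn_card_A: assumes "y \<in> A" shows "card (dn A le y) < card A"
proof (rule psubset_card_mono[OF fin])
  have "dn A le y \<subseteq> A" "y \<notin> dn A le y" by (auto simp: dn_def)
  thus "dn A le y \<subset> A" using assms by blast
qed

lemma fuel_stable:
  "\<forall>k m. card (dn A le y) < k \<longrightarrow> card (dn A le y) < m \<longrightarrow> mfuel A le k x y = mfuel A le m x y"
proof (induction "card (dn A le y)" arbitrary: y rule: less_induct)
  case less
  show ?case
  proof (intro allI impI)
    fix k m assume k: "card (dn A le y) < k" and m: "card (dn A le y) < m"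
    obtain k' where k': "k = Suc k'" using k by (cases k) auto
    obtain m' where m': "m = Suc m'" using m by (cases m) auto
    have eq: "mfuel A le k' x z = mfuel A le m' x z" if "z \<in> {z \<in> A. le x z \<and> le z y \<and> z \<noteq> y}" "y \<in> A" for z
    proof -
      have zd: "z \<in> dn A le y" using that by (auto simp: dn_def)
      have c: "card (dn A le z) < card (dn A le y)" using dn_less[OF zd that(2)] .
      have "card (dn A le z) < k'" using c k k' by simp
      moreover have "card (dn A le z) < m'" using c m m' by simp
      ultimately show ?thesis using less[OF c] by blast
    qed
    show "mfuel A le k x y = mfuel A le m x y"
    proof (cases "y \<in> A")
      case False thus ?thesis unfolding k' m' by simp
    next
      case True
      have s: "(\<Sum>z \<in> {z \<in> A. le x z \<and> le z y \<and> z \<noteq> y}. mfuel A le k' x z) =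
           (\<Sum>z \<in> {z \<in> A. le x z \<and> le z y \<and> z \<noteq> y}. mfuel A le m' x z)"
        by (rule sum.cong[OF refl]) (rule eq[OF _ True])
      show ?thesis unfolding k' m' mfuel.simps s ..
    qed
  qed
qed

definition mf where "mf x y = mfuel A le (Suc (card A)) x y"

lemma mf_is: "is_moebius A le mf"
  unfolding is_moebius_def
proof (intro conjI allI impI ballI)
  fix x y assume "x \<notin> A \<or> y \<notin> A" thus "mf x y = 0" unfolding mf_def mfuel.simps by simp
next
  fix x y assume x: "x \<in> A" and y: "y \<in> A"
  have "mfuel A le (card A) x z = mf x z" if "z \<in> {z \<in> A. le x z \<and> le z y \<and> z \<noteq> y}" for z
  proof -
    have zd: "z \<in> dn A le y" using that by (auto simp: dn_def)
    have "card (dn A le z) < card (dn A le y)" using dn_less[OF zd y] .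
    moreover have "card (dn A le y) < card A" using dn_card_A[OF y] .
    ultimately have "card (dn A le z) < card A" "card (dn A le z) < Suc (card A)" by simp_all
    thus ?thesis unfolding mf_def using fuel_stable[of z x] by blast
  qed
  hence s: "(\<Sum>z\<in>{z \<in> A. le x z \<and> le z y \<and> z \<noteq> y}. mfuel A le (card A) x z) = (\<Sum>z\<in>{z \<in> A. le x z \<and> le z y \<and> z \<noteq> y}. mf x z)"
    by (rule sum.cong[OF refl])
  show "mf x y = (if x = y then 1 else if le x y then - (\<Sum>z\<in>{z \<in> A. le x z \<and> le z y \<and> z \<noteq> y}. mf x z) else 0)"
    unfolding mf_def[of x y] mfuel.simps s using x y by simp
qed

lemma mo_unique: assumes "is_moebius A le f" "is_moebius A le g" shows "f x y = g x y"
proof (cases "x \<in> A \<and> y \<in> A")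
  case False
  have "f x y = 0" using assms(1) False unfolding is_moebius_def by blast
  moreover have "g x y = 0" using assms(2) False unfolding is_moebius_def by blast
  ultimately show ?thesis by simp
next
  case True
  hence "x \<in> A" by simp
  have "y \<in> A \<longrightarrow> f x y = g x y"
  proof (induction "card (dn A le y)" arbitrary: y rule: less_induct)
    case less
    show ?case
    proof
      assume y: "y \<in> A"
      have "f x z = g x z" if "z \<in> {z \<in> A. le x z \<and> le z y \<and> z \<noteq> y}" for z
      proof -
        have zd: "z \<in> dn A le y" using that by (auto simp: dn_def)
        show ?thesis using less[OF dn_less[OF zd y]] that by auto
      qed
      hence s: "(\<Sum>z\<in>{z \<in> A. le x z \<and> le z y \<and> z \<noteq> y}. f x z) = (\<Sum>z\<in>{z \<in> A. le x z \<and> le z y \<and> z \<noteq> y}. g x z)"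
        by (rule sum.cong[OF refl])
      have "f x y = (if x = y then 1 else if le x y then - (\<Sum>z\<in>{z \<in> A. le x z \<and> le z y \<and> z \<noteq> y}. f x z) else 0)"
        using assms(1) \<open>x \<in> A\<close> y unfolding is_moebius_def by blast
      also have "... = (if x = y then 1 else if le x y then - (\<Sum>z\<in>{z \<in> A. le x z \<and> le z y \<and> z \<noteq> y}. g x z) else 0)"
        unfolding s ..
      also have "... = g x y"
      proof -
        have "g x y = (if x = y then 1 else if le x y then - (\<Sum>z\<in>{z \<in> A. le x z \<and> le z y \<and> z \<noteq> y}. g x z) else 0)"
          using assms(2) \<open>x \<in> A\<close> y unfolding is_moebius_def by blast
        thus ?thesis by (rule sym)
      qed
      finally show "f x y = g x y" .
    qed
  qed
  thus ?thesis using True by simp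
qed

lemma moebius_is: "is_moebius A le (moebius A le)"
proof -
  have "\<exists>!f. is_moebius A le f"
  proof (rule ex1I[of _ mf])
    show "is_moebius A le mf" by (rule mf_is)
    fix f assume "is_moebius A le f" thus "f = mf" using mo_unique mf_is by blast
  qed
  thus ?thesis unfolding moebius_def by (rule theI')
qed

end


lemma conn_sym: "(x, y) \<in> conn E \<Longrightarrow> (y, x) \<in> conn E"
proof -
  assume "(x, y) \<in> conn E"
  hence "(y, x) \<in> ((E \<union> E\<inverse>)\<inverse>)\<^sup>*" unfolding conn_def by (simp add: rtrancl_converseI)
  moreover have "(E \<union> E\<inverse>)\<inverse> = E \<union> E\<inverse>" by auto
  ultimately show ?thesis unfolding conn_def by simp
qed

lemma conn_trans: "(x, y) \<in> conn E \<Longrightarrow> (y, z) \<in> conn E \<Longrightarrow> (x, z) \<in> conn E"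
  unfolding conn_def by (rule rtrancl_trans)

lemma conn_refl: "(x, x) \<in> conn E" unfolding conn_def by simp

lemma conn_edge: "(p, c) \<in> E \<Longrightarrow> (p, c) \<in> conn E" "(p, c) \<in> E \<Longrightarrow> (c, p) \<in> conn E"
  unfolding conn_def by auto

lemma conn_cut:
  assumes inc: "\<forall>(p, c) \<in> E. p < c" and cut: "\<forall>(p, c) \<in> E. \<not> (p < k \<and> k \<le> c)"
    and "(x, y) \<in> conn E"
  shows "x < k \<longleftrightarrow> y < k"
  using assms(3) unfolding conn_def
proof (induction rule: rtrancl_induct)
  case base show ?case by simp
next
  case (step y z)
  from step.hyps(2) have "(y, z) \<in> E \<or> (z, y) \<in> E" by auto
  hence "y < k \<longleftrightarrow> z < k"
  proof
    assume e: "(y, z) \<in> E"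
    thus ?thesis using inc cut e by fastforce
  next
    assume e: "(z, y) \<in> E"
    thus ?thesis using inc cut e by fastforce
  qed
  thus ?case using step.IH by simp
qed

lemma root_desc:
  assumes up: "\<forall>p q c. (p, c) \<in> E \<and> (q, c) \<in> E \<longrightarrow> p = q"
    and r: "\<forall>q. (q, r) \<notin> E" and "(r, y) \<in> conn E"
  shows "(r, y) \<in> E\<^sup>*"
  using assms(3) unfolding conn_def
proof (induction rule: rtrancl_induct)
  case base show ?case by simp
next
  case (step y z)
  from step.hyps(2) have "(y, z) \<in> E \<or> (z, y) \<in> E" by auto
  thus ?case
  proof
    assume "(y, z) \<in> E" thus ?thesis using step.IH by simp
  next
    assume zy: "(z, y) \<in> E"
    have "y \<noteq> r" using zy r by blast
    hence "(r, y) \<in> E\<^sup>+" using step.IH by (simp add: rtrancl_eq_or_trancl)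
    then obtain w where w: "(r, w) \<in> E\<^sup>*" "(w, y) \<in> E" by (meson tranclD2)
    have "w = z" using up w(2) zy by blast
    thus ?thesis using w(1) by simp
  qed
qed

lemma desc_ge:
  fixes E :: "(nat \<times> nat) set"
  assumes inc: "\<forall>(p, c) \<in> E. p < c" and "(r, y) \<in> E\<^sup>*"
  shows "r \<le> y"
  using assms(2)
proof (induction rule: rtrancl_induct)
  case base show ?case by simp
next
  case (step y z) thus ?case using inc by fastforce
qed

lemma conn_vset:
  assumes "E \<subseteq> vset n \<times> vset n" "x \<in> vset n" "(x, y) \<in> conn E"
  shows "y \<in> vset n"
  using assms(3) unfolding conn_def
proof (induction rule: rtrancl_induct)
  case base thus ?case using assms(2) .
next
  case (step y z) thus ?case using assms(1) by auto
qed

lemma exists_root: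
  assumes sub: "E \<subseteq> vset n \<times> vset n" and inc: "\<forall>(p, c) \<in> E. p < c"
  shows "u \<in> vset n \<Longrightarrow> \<exists>r \<in> vset n. (u, r) \<in> conn E \<and> (\<forall>q. (q, r) \<notin> E)"
proof (induction u rule: less_induct)
  case (less u)
  show ?case
  proof (cases "\<exists>q. (q, u) \<in> E")
    case False thus ?thesis using less.prems conn_refl by blast
  next
    case True
    then obtain q where q: "(q, u) \<in> E" by blast
    have "q < u" "q \<in> vset n" using q inc sub by auto
    then obtain r where "r \<in> vset n" "(q, r) \<in> conn E" "\<forall>q. (q, r) \<notin> E" using less.IH by blast
    moreover have "(u, q) \<in> conn E" using conn_edge(2)[OF q] .
    ultimately show ?thesis using conn_trans by blast
  qed
qed

definition nocross :: "nat \<Rightarrow> (nat \<times> nat) set \<Rightarrow> bool" where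
  "nocross n E \<longleftrightarrow> (\<forall>(p, c) \<in> E. \<forall>r \<in> vset n. (\<forall>q. (q, r) \<notin> E) \<longrightarrow> \<not> (p < r \<and> r < c))"

lemma comp_order:
  assumes sub: "E \<subseteq> vset n \<times> vset n" and inc: "\<forall>(p, c) \<in> E. p < c" and nc: "nocross n E"
    and ru: "(u, ru) \<in> conn E" and rv: "rv \<in> vset n" "(v, rv) \<in> conn E" "\<forall>q. (q, rv) \<notin> E"
    and lt: "ru < rv" and x: "(u, x) \<in> conn E" and y: "(v, y) \<in> conn E"
  shows "x < y"
proof -
  have cut: "\<forall>(p, c) \<in> E. \<not> (p < rv \<and> rv \<le> c)"
  proof (intro ballI, clarify)
    fix p c assume pc: "(p, c) \<in> E" "p < rv" "rv \<le> c"
    show False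
    proof (cases "c = rv")
      case True thus False using pc rv(3) by blast
    next
      case False thus False using nc pc rv unfolding nocross_def by fastforce
    qed
  qed
  have "(ru, x) \<in> conn E" using conn_trans[OF conn_sym[OF ru] x] .
  hence "x < rv" using conn_cut[OF inc cut] lt by blast
  moreover have "(rv, y) \<in> conn E" using conn_trans[OF conn_sym[OF rv(2)] y] .
  hence "\<not> y < rv" using conn_cut[OF inc cut] by blast
  ultimately show ?thesis by simp
qed

lemma char:
  assumes sub: "E \<subseteq> vset n \<times> vset n" and inc: "\<forall>(p, c) \<in> E. p < c"
    and up: "\<forall>p q c. (p, c) \<in> E \<and> (q, c) \<in> E \<longrightarrow> p = q"
  shows "priority_forest n E \<longleftrightarrow> nocross n E"
proof
  assume pf: "priority_forest n E"
  show "nocross n E" unfolding nocross_def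
  proof (intro ballI impI, clarify)
    fix p c r assume pc: "(p, c) \<in> E" and r: "r \<in> vset n" "\<forall>q. (q, r) \<notin> E" and lt: "p < r" "r < c"
    have pv: "p \<in> vset n" "c \<in> vset n" using pc sub by auto
    show False
    proof (cases "(p, r) \<in> conn E")
      case True
      have "(r, p) \<in> E\<^sup>*" using root_desc[OF up r(2) conn_sym[OF True]] .
      hence "r \<le> p" using desc_ge[OF inc] by blast
      thus False using lt by simp
    next
      case False
      from pf have "(\<forall>x \<in> vset n. \<forall>y \<in> vset n. (p, x) \<in> conn E \<and> (r, y) \<in> conn E \<longrightarrow> x < y) \<or>
        (\<forall>x \<in> vset n. \<forall>y \<in> vset n. (p, x) \<in> conn E \<and> (r, y) \<in> conn E \<longrightarrow> y < x)"
        using pv r(1) False unfolding priority_forest_def by blast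
      thus False
      proof
        assume "\<forall>x \<in> vset n. \<forall>y \<in> vset n. (p, x) \<in> conn E \<and> (r, y) \<in> conn E \<longrightarrow> x < y"
        hence "c < r" using pv r(1) conn_edge(1)[OF pc] conn_refl by blast
        thus False using lt by simp
      next
        assume "\<forall>x \<in> vset n. \<forall>y \<in> vset n. (p, x) \<in> conn E \<and> (r, y) \<in> conn E \<longrightarrow> y < x"
        hence "r < p" using pv r(1) conn_refl by blast
        thus False using lt by simp
      qed
    qed
  qed
next
  assume nc: "nocross n E"
  have "(\<forall>x \<in> vset n. \<forall>y \<in> vset n. (u, x) \<in> conn E \<and> (v, y) \<in> conn E \<longrightarrow> x < y) \<or>
        (\<forall>x \<in> vset n. \<forall>y \<in> vset n. (u, x) \<in> conn E \<and> (v, y) \<in> conn E \<longrightarrow> y < x)"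
    if uv: "u \<in> vset n" "v \<in> vset n" "(u, v) \<notin> conn E" for u v
  proof -
    obtain ru where ru: "ru \<in> vset n" "(u, ru) \<in> conn E" "\<forall>q. (q, ru) \<notin> E"
      using exists_root[OF sub inc uv(1)] by blast
    obtain rv where rv: "rv \<in> vset n" "(v, rv) \<in> conn E" "\<forall>q. (q, rv) \<notin> E"
      using exists_root[OF sub inc uv(2)] by blast
    have "ru \<noteq> rv" using uv(3) ru rv conn_trans conn_sym by metis
    hence "ru < rv \<or> rv < ru" by arith
    thus ?thesis
    proof
      assume "ru < rv"
      thus ?thesis using comp_order[OF sub inc nc ru(2) rv] by blast
    next
      assume "rv < ru"
      thus ?thesis using comp_order[OF sub inc nc rv(2) ru] by blast
    qed
  qed
  thus "priority_forest n E" unfolding priority_forest_def using sub inc up by blast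
qed



lemma alt_sum:
  assumes "finite X" "X \<noteq> {}"
  shows "(\<Sum>S \<in> Pow X. (-1::int) ^ card S) = 0"
proof -
  obtain x where x: "x \<in> X" using assms(2) by blast
  define Y where "Y = X - {x}"
  have X: "X = insert x Y" "x \<notin> Y" "finite Y" using x assms(1) by (auto simp: Y_def)
  have inj: "inj_on (insert x) (Pow Y)"
  proof (rule inj_onI)
    fix A B assume "A \<in> Pow Y" "B \<in> Pow Y" "insert x A = insert x B"
    hence "x \<notin> A" "x \<notin> B" "insert x A - {x} = insert x B - {x}" using X(2) by auto
    thus "A = B" by simp
  qed
  have disj: "Pow Y \<inter> insert x ` Pow Y = {}" using X(2) by auto
  have "(\<Sum>S \<in> Pow X. (-1::int) ^ card S) = (\<Sum>S \<in> Pow Y. (-1::int) ^ card S) + (\<Sum>S \<in> insert x ` Pow Y. (-1::int) ^ card S)"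
    unfolding X(1) Pow_insert using X(3) disj by (simp add: sum.union_disjoint)
  also have "(\<Sum>S \<in> insert x ` Pow Y. (-1::int) ^ card S) = (\<Sum>S \<in> Pow Y. (-1::int) ^ card (insert x S))"
    using sum.reindex[OF inj] by simp
  also have "... = (\<Sum>S \<in> Pow Y. - ((-1::int) ^ card S))"
  proof (rule sum.cong[OF refl])
    fix S assume "S \<in> Pow Y"
    hence "finite S" "x \<notin> S" using X by (auto intro: finite_subset)
    thus "(-1::int) ^ card (insert x S) = - ((-1) ^ card S)" by simp
  qed
  finally show ?thesis by (simp add: sum_negf)
qed

definition blocks :: "nat \<times> nat \<Rightarrow> nat \<times> nat \<Rightarrow> bool" where
  "blocks g f \<longleftrightarrow> fst g < snd f \<and> snd f < snd g"

lemma pf_parts: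
  assumes "priority_forest n E"
  shows "E \<subseteq> vset n \<times> vset n" "\<forall>(p, c) \<in> E. p < c" "\<forall>p q c. (p, c) \<in> E \<and> (q, c) \<in> E \<longrightarrow> p = q"
  using assms unfolding priority_forest_def by blast+

lemma rel_char:
  assumes Q: "priority_forest n Q" and RQ: "R \<subseteq> Q"
  shows "priority_forest n R \<longleftrightarrow> \<not> (\<exists>g \<in> R. \<exists>f \<in> Q - R. blocks g f)"
proof -
  note q = pf_parts[OF Q]
  have sub: "R \<subseteq> vset n \<times> vset n" using q(1) RQ by blast
  have inc: "\<forall>(p, c) \<in> R. p < c" using q(2) RQ by blast
  have up: "\<forall>p q c. (p, c) \<in> R \<and> (q, c) \<in> R \<longrightarrow> p = q" using q(3) RQ by blast
  have ncQ: "nocross n Q" using char[OF q] Q by blast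
  have "nocross n R \<longleftrightarrow> \<not> (\<exists>g \<in> R. \<exists>f \<in> Q - R. blocks g f)"
  proof
    assume nc: "nocross n R"
    show "\<not> (\<exists>g \<in> R. \<exists>f \<in> Q - R. blocks g f)"
    proof
      assume "\<exists>g \<in> R. \<exists>f \<in> Q - R. blocks g f"
      then obtain p c p' c' where g: "(p, c) \<in> R" and f: "(p', c') \<in> Q - R" and b: "p < c'" "c' < c"
        unfolding blocks_def by force
      have cv: "c' \<in> vset n" using f q(1) by blast
      have "\<forall>q. (q, c') \<notin> R"
      proof (intro allI notI)
        fix x assume "(x, c') \<in> R"
        hence "x = p'" using q(3) RQ f by blast
        thus False using f \<open>(x, c') \<in> R\<close> by blast
      qed
      thus False using nc g cv b unfolding nocross_def by fastforce
    qed
  next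
    assume nb: "\<not> (\<exists>g \<in> R. \<exists>f \<in> Q - R. blocks g f)"
    show "nocross n R" unfolding nocross_def
    proof (intro ballI impI, clarify)
      fix p c r assume pc: "(p, c) \<in> R" and r: "r \<in> vset n" "\<forall>q. (q, r) \<notin> R" and lt: "p < r" "r < c"
      show False
      proof (cases "\<exists>x. (x, r) \<in> Q")
        case True
        then obtain x where "(x, r) \<in> Q" by blast
        hence "(x, r) \<in> Q - R" using r by blast
        moreover have "blocks (p, c) (x, r)" using lt unfolding blocks_def by simp
        ultimately show False using nb pc by blast
      next
        case False
        thus False using ncQ pc RQ r(1) lt unfolding nocross_def by blast
      qed
    qed
  qed
  thus ?thesis using char[OF sub inc up] by simp
qed



lemma pf_finite: "priority_forest n E \<Longrightarrow> finite E"
  using pf_parts(1)[of n E] finite_subset[of E "vset n \<times> vset n"] by (auto simp: vset_def)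

lemma key_sum:
  assumes P: "priority_forest n P" and Q: "priority_forest n Q" and PQ: "P \<subset> Q"
  shows "(\<Sum>R \<in> {R. priority_forest n R \<and> P \<subseteq> R \<and> R \<subseteq> Q}.
           (if boolean_forest n P R then (-1::int) ^ (card R - card P) else 0)) = 0"
proof -
  define X where "X = {e \<in> Q - P. \<forall>f \<in> Q. blocks e f \<longrightarrow> f \<in> P}"
  define J where "J = {R. priority_forest n R \<and> P \<subseteq> R \<and> R \<subseteq> Q}"
  have finQ: "finite Q" using pf_finite[OF Q] .
  have finJ: "finite J" unfolding J_def using finQ by (auto intro: finite_subset[of _ "Pow Q"])
  have finX: "finite X" unfolding X_def using finQ by simp
  have XQ: "X \<subseteq> Q - P" unfolding X_def by blast
  have Pnb: "\<not> (\<exists>g \<in> P. \<exists>f \<in> Q - P. blocks g f)" using rel_char[OF Q] PQ P by blast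
  have "X \<noteq> {}"
  proof -
    have ne: "Q - P \<noteq> {}" "finite (Q - P)" using PQ finQ by auto
    define m where "m = Min (snd ` (Q - P))"
    have "m \<in> snd ` (Q - P)" unfolding m_def using ne by simp
    then obtain e where e: "e \<in> Q - P" "snd e = m" by blast
    have "\<forall>f \<in> Q. blocks e f \<longrightarrow> f \<in> P"
    proof (intro ballI impI)
      fix f assume f: "f \<in> Q" "blocks e f"
      show "f \<in> P"
      proof (rule ccontr)
        assume "f \<notin> P"
        hence "m \<le> snd f" unfolding m_def using ne f by simp
        thus False using f e unfolding blocks_def by simp
      qed
    qed
    thus ?thesis using e unfolding X_def by blast
  qed
  have BJ: "{R \<in> J. boolean_forest n P R} = (\<lambda>S. P \<union> S) ` Pow X"
  proof (intro equalityI subsetI)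
    fix R assume "R \<in> {R \<in> J. boolean_forest n P R}"
    hence R: "priority_forest n R" "P \<subseteq> R" "R \<subseteq> Q" "boolean_forest n P R" unfolding J_def by auto
    have Rnb: "\<not> (\<exists>g \<in> R. \<exists>f \<in> Q - R. blocks g f)" using rel_char[OF Q R(3)] R(1) by blast
    have rem: "\<not> (\<exists>g \<in> R - {e}. \<exists>f \<in> Q - (R - {e}). blocks g f)" if "e \<in> R - P" for e
    proof -
      have "priority_forest n (R - {e})" using R(4) that unfolding boolean_forest_def removable_def by blast
      thus ?thesis using rel_char[OF Q, of "R - {e}"] R(3) by blast
    qed
    have "R - P \<subseteq> X"
    proof
      fix e assume e: "e \<in> R - P"
      have "f \<in> P" if f: "f \<in> Q" "blocks e f" for f
      proof (rule ccontr)
        assume fP: "f \<notin> P"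
        have "f \<in> R" using Rnb e f by blast
        have "e \<noteq> f" using f(2) unfolding blocks_def by auto
        thus False using rem[of f] \<open>f \<in> R\<close> fP e f by blast
      qed
      thus "e \<in> X" unfolding X_def using e R(3) by blast
    qed
    moreover have "R = P \<union> (R - P)" using R(2) by blast
    ultimately show "R \<in> (\<lambda>S. P \<union> S) ` Pow X" by blast
  next
    fix R assume "R \<in> (\<lambda>S. P \<union> S) ` Pow X"
    then obtain S where S: "S \<subseteq> X" "R = P \<union> S" by blast
    have RQ: "R \<subseteq> Q" using S XQ PQ by blast
    have Rnb: "\<not> (\<exists>g \<in> R. \<exists>f \<in> Q - R. blocks g f)"
    proof
      assume "\<exists>g \<in> R. \<exists>f \<in> Q - R. blocks g f"
      then obtain g f where gf: "g \<in> R" "f \<in> Q - R" "blocks g f" by blast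
      show False
      proof (cases "g \<in> P")
        case True thus False using Pnb gf S by blast
      next
        case False
        hence "g \<in> X" using gf S by blast
        hence "f \<in> P" using gf unfolding X_def by blast
        thus False using gf S by blast
      qed
    qed
    have pfR: "priority_forest n R" using rel_char[OF Q RQ] Rnb by blast
    have "boolean_forest n P R" unfolding boolean_forest_def removable_def
    proof (intro ballI conjI)
      fix e assume e: "e \<in> R - P"
      thus "e \<in> R - P" .
      have eX: "e \<in> X" using e S by blast
      have "\<not> (\<exists>g \<in> R - {e}. \<exists>f \<in> Q - (R - {e}). blocks g f)"
      proof
        assume "\<exists>g \<in> R - {e}. \<exists>f \<in> Q - (R - {e}). blocks g f"
        then obtain g f where gf: "g \<in> R - {e}" "f \<in> Q - (R - {e})" "blocks g f" by blast
        show False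
        proof (cases "f = e")
          case False
          thus False using Rnb gf by blast
        next
          case True
          show False
          proof (cases "g \<in> P")
            case gP: True thus False using Pnb gf True eX XQ by blast
          next
            case False
            hence "g \<in> X" using gf S by blast
            hence "e \<in> P" using gf True eX XQ unfolding X_def by blast
            thus False using eX XQ by blast
          qed
        qed
      qed
      thus "priority_forest n (R - {e})" using rel_char[OF Q, of "R - {e}"] RQ by blast
    qed
    thus "R \<in> {R \<in> J. boolean_forest n P R}" unfolding J_def using pfR S RQ by blast
  qed
  have inj: "inj_on (\<lambda>S. P \<union> S) (Pow X)"
  proof (rule inj_onI)
    fix A B assume "A \<in> Pow X" "B \<in> Pow X" "P \<union> A = P \<union> B"
    moreover have "A \<inter> P = {}" "B \<inter> P = {}" using \<open>A \<in> Pow X\<close> \<open>B \<in> Pow X\<close> XQ by auto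
    ultimately show "A = B" by blast
  qed
  have "(\<Sum>R \<in> J. (if boolean_forest n P R then (-1::int) ^ (card R - card P) else 0))
      = (\<Sum>R \<in> {R \<in> J. boolean_forest n P R}. (-1::int) ^ (card R - card P))"
    by (rule sym, rule sum.inter_filter[OF finJ])
  also have "... = (\<Sum>S \<in> Pow X. (-1::int) ^ (card (P \<union> S) - card P))"
    unfolding BJ using sum.reindex[OF inj] by simp
  also have "... = (\<Sum>S \<in> Pow X. (-1::int) ^ card S)"
  proof (rule sum.cong[OF refl])
    fix S assume "S \<in> Pow X"
    hence "finite S" "S \<inter> P = {}" using finX XQ by (auto intro: finite_subset)
    moreover have "finite P" using pf_finite[OF P] .
    ultimately have "card (P \<union> S) = card P + card S" by (simp add: card_Un_disjoint Int_commute)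
    thus "(-1::int) ^ (card (P \<union> S) - card P) = (-1) ^ card S" by simp
  qed
  also have "... = 0" using alt_sum[OF finX \<open>X \<noteq> {}\<close>] .
  finally show ?thesis unfolding J_def .
qed



lemma pi_fpo: "fpo (pi_carrier n) pi_le"
proof
  have "{E. priority_forest n E} \<subseteq> Pow (vset n \<times> vset n)" using pf_parts(1) by blast
  moreover have "finite (Pow (vset n \<times> vset n))" by (simp add: vset_def)
  ultimately have "finite {E. priority_forest n E}" by (rule finite_subset)
  thus "finite (pi_carrier n)" unfolding pi_carrier_def by simp
next
  fix x y z :: "(nat \<times> nat) set option"
  assume "pi_le x y" "pi_le y z" thus "pi_le x z"
    unfolding pi_le_def by (auto split: option.splits)
next
  fix x y :: "(nat \<times> nat) set option"
  assume "pi_le x y" "pi_le y x" thus "x = y"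
    unfolding pi_le_def by (auto split: option.splits)
qed

lemma main_ind:
  assumes P: "priority_forest n P"
  shows "priority_forest n Q \<Longrightarrow> P \<subseteq> Q \<Longrightarrow> moebius (pi_carrier n) pi_le (Some P) (Some Q) =
    (if boolean_forest n P Q then (-1::int) ^ (card Q - card P) else 0)"
proof (induction "card Q" arbitrary: Q rule: less_induct)
  case (less Q)
  define mu where "mu = moebius (pi_carrier n) pi_le"
  define h where "h R = (if boolean_forest n P R then (-1::int) ^ (card R - card P) else 0)" for R
  have mis: "is_moebius (pi_carrier n) pi_le mu" unfolding mu_def using fpo.moebius_is[OF pi_fpo] .
  have SP: "Some P \<in> pi_carrier n" using P unfolding pi_carrier_def by blast
  have SQ: "Some Q \<in> pi_carrier n" using less.prems unfolding pi_carrier_def by blast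
  have rec: "mu (Some P) (Some Q) = (if Some P = Some Q then 1 else if pi_le (Some P) (Some Q) then
     - (\<Sum>z \<in> {z \<in> pi_carrier n. pi_le (Some P) z \<and> pi_le z (Some Q) \<and> z \<noteq> Some Q}. mu (Some P) z) else 0)"
    using mis SP SQ unfolding is_moebius_def by blast
  show ?case
  proof (cases "P = Q")
    case True
    have "boolean_forest n P Q" using True unfolding boolean_forest_def by simp
    thus ?thesis using rec True unfolding mu_def by simp
  next
    case False
    hence PQ: "P \<subset> Q" using less.prems by blast
    define I where "I = {R. priority_forest n R \<and> P \<subseteq> R \<and> R \<subseteq> Q \<and> R \<noteq> Q}"
    have Zeq: "{z \<in> pi_carrier n. pi_le (Some P) z \<and> pi_le z (Some Q) \<and> z \<noteq> Some Q} = Some ` I"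
    proof (intro equalityI subsetI)
      fix z assume z: "z \<in> {z \<in> pi_carrier n. pi_le (Some P) z \<and> pi_le z (Some Q) \<and> z \<noteq> Some Q}"
      then obtain R where R: "z = Some R" unfolding pi_le_def by (cases z) auto
      thus "z \<in> Some ` I" using z unfolding I_def pi_carrier_def pi_le_def by auto
    next
      fix z assume "z \<in> Some ` I"
      then obtain R where "z = Some R" "R \<in> I" by blast
      thus "z \<in> {z \<in> pi_carrier n. pi_le (Some P) z \<and> pi_le z (Some Q) \<and> z \<noteq> Some Q}"
        unfolding I_def pi_carrier_def pi_le_def by auto
    qed
    have finQ: "finite Q" using pf_finite[OF less.prems(1)] .
    have finI: "finite I" unfolding I_def using finQ by (auto intro: finite_subset[of _ "Pow Q"])
    have IH: "mu (Some P) (Some R) = h R" if "R \<in> I" for R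
    proof -
      have "R \<subset> Q" using that unfolding I_def by blast
      hence "card R < card Q" using finQ by (rule psubset_card_mono[rotated])
      thus ?thesis using less.hyps[of R] that unfolding I_def mu_def h_def by blast
    qed
    have "(\<Sum>z \<in> Some ` I. mu (Some P) z) = (\<Sum>R \<in> I. mu (Some P) (Some R))"
      by (simp add: sum.reindex)
    also have "... = (\<Sum>R \<in> I. h R)" using IH by (rule sum.cong[OF refl])
    finally have s1: "(\<Sum>z \<in> Some ` I. mu (Some P) z) = (\<Sum>R \<in> I. h R)" .
    have Jeq: "{R. priority_forest n R \<and> P \<subseteq> R \<and> R \<subseteq> Q} = insert Q I"
      unfolding I_def using less.prems by blast
    have "(\<Sum>R \<in> insert Q I. h R) = 0" using key_sum[OF P less.prems(1) PQ] Jeq unfolding h_def by simp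
    moreover have "Q \<notin> I" unfolding I_def by blast
    ultimately have "h Q + (\<Sum>R \<in> I. h R) = 0" using finI by simp
    moreover have "pi_le (Some P) (Some Q)" using PQ unfolding pi_le_def by auto
    ultimately have "mu (Some P) (Some Q) = h Q" using rec Zeq s1 False by simp
    thus ?thesis unfolding mu_def h_def .
  qed
qed

theorem lemma5p11:
  fixes n :: nat and P P' :: "(nat \<times> nat) set"
  assumes "priority_forest n P" and "priority_forest n P'" and "P \<subset> P'"
  shows "moebius (pi_carrier n) pi_le (Some P) (Some P') =
    (if boolean_forest n P P' then (-1) ^ (rank P' - rank P) else 0)"
  using main_ind[OF assms(1) assms(2)] assms(3) unfolding rank_def by blast

end
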